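(* In any $\{K_3,K_4\}$-decomposition of $K_{18}$ with $\alpha=13$, there are $7$ distinct vertices $w_1,\dots,w_7$ with $\alpha_{w_i}=4$ for all $i\in\{1,\dots,7\}$, and at least two of the copies of $K_3$ in the decomposition have all three of their vertices in $\{w_1,\dots,w_7\}$.
   Context: A $\{K_3,K_4\}$-decomposition of $K_v$ is a collection of subgraphs, each isomorphic to $K_3$ or $K_4$ (triples and quadruples), such that every edge of $K_v$ lies in exactly one of them. $\alpha$ is the number of copies of $K_3$ in the decomposition, and for a vertex $x$, $\alpha_x$ is the number of copies of $K_3$ in the decomposition containing $x$. *)

theory Defs
  imports Main
begin

text \<open>A copy of K3 or K4 inside the complete graph K_v on vertex set V is determined by its
  vertex set (a 3- or 4-element subset of V); its edges are all 2-subsets of that set.\<close>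

definition K34_decomposition :: "'a set \<Rightarrow> 'a set set \<Rightarrow> bool" where
  "K34_decomposition V D \<longleftrightarrow>
     (\<forall>B\<in>D. B \<subseteq> V \<and> (card B = 3 \<or> card B = 4)) \<and>
     (\<forall>x\<in>V. \<forall>y\<in>V. x \<noteq> y \<longrightarrow> (\<exists>!B. B \<in> D \<and> x \<in> B \<and> y \<in> B))"

definition triples :: "'a set set \<Rightarrow> 'a set set" where
  "triples D = {B \<in> D. card B = 3}"

definition alpha :: "'a set set \<Rightarrow> nat" where
  "alpha D = card (triples D)"

definition alpha_at :: "'a set set \<Rightarrow> 'a \<Rightarrow> nat" where
  "alpha_at D x = card {B \<in> triples D. x \<in> B}"

end

theory Submission
  imports Defs
begin

lemma lin:
  assumes "K34_decomposition V D" "B1 \<in> D" "B2 \<in> D" "u \<in> B1" "v \<in> B1" "u \<in> B2" "v \<in> B2" "u \<noteq> v"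
  shows "B1 = B2"
proof -
  have "u \<in> V" "v \<in> V" using assms unfolding K34_decomposition_def by blast+
  then have "\<exists>!B. B \<in> D \<and> u \<in> B \<and> v \<in> B" using assms unfolding K34_decomposition_def by blast
  then show ?thesis using assms by blast
qed

lemma finD:
  assumes "K34_decomposition V D" "finite V"
  shows "finite D"
proof -
  have "D \<subseteq> Pow V" using assms unfolding K34_decomposition_def by blast
  then show ?thesis using assms(2) finite_subset by blast
qed

lemma degree:
  assumes K: "K34_decomposition V D" and fV: "finite V" and x: "x \<in> V"
  shows "(\<Sum>B\<in>{B\<in>D. x \<in> B}. card B - 1) = card V - 1"
proof -
  let ?I = "{B\<in>D. x \<in> B}"
  have fD: "finite D" using finD[OF K fV] .
  have sub: "\<And>B. B \<in> D \<Longrightarrow> B \<subseteq> V" using K unfolding K34_decomposition_def by blast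
  have eq: "V - {x} = (\<Union>B\<in>?I. B - {x})"
  proof
    show "V - {x} \<subseteq> (\<Union>B\<in>?I. B - {x})"
    proof
      fix y assume y: "y \<in> V - {x}"
      then have "\<exists>!B. B \<in> D \<and> x \<in> B \<and> y \<in> B" using K x unfolding K34_decomposition_def by blast
      then show "y \<in> (\<Union>B\<in>?I. B - {x})" using y by blast
    qed
    show "(\<Union>B\<in>?I. B - {x}) \<subseteq> V - {x}" using sub by blast
  qed
  have "card (V - {x}) = (\<Sum>B\<in>?I. card (B - {x}))"
    unfolding eq
  proof (rule card_UN_disjoint)
    show "finite ?I" using fD by simp
    show "\<forall>i\<in>?I. finite (i - {x})" using sub fV finite_subset by blast
    show "\<forall>i\<in>?I. \<forall>j\<in>?I. i \<noteq> j \<longrightarrow> (i - {x}) \<inter> (j - {x}) = {}"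
      using lin[OF K] by blast
  qed
  also have "\<dots> = (\<Sum>B\<in>?I. card B - 1)"
    by (rule sum.cong) (auto simp: card_Diff_singleton)
  finally show ?thesis using x fV by simp
qed

lemma alpha_vals:
  assumes K: "K34_decomposition V D" and fD: "finite D" and deg: "(\<Sum>B\<in>{B\<in>D. x \<in> B}. card B - 1) = 17"
  shows "alpha_at D x = 1 \<or> alpha_at D x = 4 \<or> alpha_at D x = 7"
proof -
  let ?I = "{B\<in>D. x \<in> B}"
  let ?A = "{B\<in>?I. card B = 3}"
  let ?C = "{B\<in>?I. card B = 4}"
  have split: "?I = ?A \<union> ?C" using K unfolding K34_decomposition_def by blast
  have s: "(\<Sum>B\<in>?I. card B - 1) = (\<Sum>B\<in>?A. card B - 1) + (\<Sum>B\<in>?C. card B - 1)"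
  proof -
    have "finite ?A" "finite ?C" "?A \<inter> ?C = {}" using fD by auto
    from sum.union_disjoint[OF this, of "\<lambda>B. card B - 1"] show ?thesis
      by (simp only: split[symmetric])
  qed
  have a: "(\<Sum>B\<in>?A. card B - 1) = 2 * card ?A" by simp
  have c: "(\<Sum>B\<in>?C. card B - 1) = 3 * card ?C" by simp
  have e: "2 * card ?A + 3 * card ?C = 17"
    using deg s a c by linarith
  have "?A = {B \<in> triples D. x \<in> B}" unfolding triples_def by blast
  then have "alpha_at D x = card ?A" unfolding alpha_at_def by simp
  with e show ?thesis by presburger
qed

lemma double_count:
  assumes "finite T" "finite S"
  shows "(\<Sum>v\<in>S. card {t\<in>T. v \<in> t}) = (\<Sum>t\<in>T. card (t \<inter> S))"
proof -
  have "(\<Sum>v\<in>S. card {t\<in>T. v \<in> t}) = (\<Sum>v\<in>S. \<Sum>t\<in>T. if v \<in> t then 1 else 0)"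
  proof (intro sum.cong refl)
    fix v assume "v \<in> S"
    have "card {t\<in>T. v \<in> t} = (\<Sum>t\<in>{t\<in>T. v \<in> t}. 1)" by simp
    also have "\<dots> = (\<Sum>t\<in>T. if v \<in> t then 1 else 0)"
      using assms(1) by (rule sum.inter_filter)
    finally show "card {t\<in>T. v \<in> t} = (\<Sum>t\<in>T. if v \<in> t then 1 else 0)" .
  qed
  also have "\<dots> = (\<Sum>t\<in>T. \<Sum>v\<in>S. if v \<in> t then 1 else 0)" by (rule sum.swap)
  also have "\<dots> = (\<Sum>t\<in>T. card (t \<inter> S))"
  proof (intro sum.cong refl)
    fix t assume "t \<in> T"
    have "card (t \<inter> S) = (\<Sum>v\<in>{v\<in>S. v \<in> t}. 1)" by (simp add: Int_def conj_commute)
    also have "\<dots> = (\<Sum>v\<in>S. if v \<in> t then 1 else 0)"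
      using assms(2) by (rule sum.inter_filter)
    finally show "(\<Sum>v\<in>S. if v \<in> t then 1 else 0) = card (t \<inter> S)" by simp
  qed
  finally show ?thesis .
qed

lemma pair_count:
  assumes fT: "finite T" and fF: "finite F"
    and L: "\<And>t1 t2 u v. t1 \<in> T \<Longrightarrow> t2 \<in> T \<Longrightarrow> u \<in> t1 \<Longrightarrow> v \<in> t1 \<Longrightarrow> u \<in> t2 \<Longrightarrow> v \<in> t2 \<Longrightarrow> u \<noteq> v \<Longrightarrow> t1 = t2"
  shows "(\<Sum>t\<in>T. card (t \<inter> F) choose 2) \<le> card F choose 2"
proof -
  define P where "P t = {e. e \<subseteq> t \<inter> F \<and> card e = 2}" for t
  have "(\<Sum>t\<in>T. card (t \<inter> F) choose 2) = (\<Sum>t\<in>T. card (P t))"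
  proof (intro sum.cong refl)
    fix t assume "t \<in> T"
    show "card (t \<inter> F) choose 2 = card (P t)"
      unfolding P_def using n_subsets[of "t \<inter> F" 2] fF by simp
  qed
  also have "\<dots> = card (\<Union>(P ` T))"
  proof (rule card_UN_disjoint[symmetric])
    show "finite T" by fact
    show "\<forall>i\<in>T. finite (P i)" unfolding P_def using fF
      by (auto intro: finite_subset[of _ "Pow F"])
    show "\<forall>i\<in>T. \<forall>j\<in>T. i \<noteq> j \<longrightarrow> P i \<inter> P j = {}"
    proof (intro ballI impI)
      fix i j assume ij: "i \<in> T" "j \<in> T" "i \<noteq> j"
      show "P i \<inter> P j = {}"
      proof (rule ccontr)
        assume "P i \<inter> P j \<noteq> {}"
        then obtain e where e: "e \<subseteq> i \<inter> F" "e \<subseteq> j \<inter> F" "card e = 2" unfolding P_def by blast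
        then obtain u v where "e = {u, v}" "u \<noteq> v" by (auto simp: card_2_iff)
        then show False using L[of i j u v] e ij by blast
      qed
    qed
  qed
  also have "\<dots> \<le> card {e. e \<subseteq> F \<and> card e = 2}"
    by (rule card_mono) (use fF in \<open>auto simp: P_def\<close>)
  also have "\<dots> = card F choose 2" using fF by (simp add: n_subsets)
  finally show ?thesis .
qed


theorem mainTheorem10:
  fixes V :: "'a set" and D :: "'a set set"
  assumes "finite V" and "card V = 18"
    and "K34_decomposition V D"
    and "alpha D = 13"
  shows "\<exists>W. W \<subseteq> V \<and> card W = 7 \<and> (\<forall>w\<in>W. alpha_at D w = 4) \<and>
             card {B \<in> triples D. B \<subseteq> W} \<ge> 2"
proof -
  note K = assms(3)
  note fV = assms(1)
  define T where "T = triples D"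
  define a where "a v = alpha_at D v" for v
  have fD: "finite D" using finD[OF K fV] .
  have TD: "T \<subseteq> D" unfolding T_def triples_def by blast
  have fT: "finite T" using fD TD finite_subset by blast
  have cT: "card T = 13" using assms(4) unfolding alpha_def T_def .
  have Tsub: "\<And>t. t \<in> T \<Longrightarrow> t \<subseteq> V \<and> card t = 3"
    using K unfolding T_def triples_def K34_decomposition_def by blast
  have aT: "\<And>v. a v = card {t\<in>T. v \<in> t}" unfolding a_def alpha_at_def T_def ..
  have vals: "\<And>v. v \<in> V \<Longrightarrow> a v = 1 \<or> a v = 4 \<or> a v = 7"
  proof -
    fix v assume v: "v \<in> V"
    have "(\<Sum>B\<in>{B\<in>D. v \<in> B}. card B - 1) = 17" using degree[OF K fV v] assms(2) by simp
    then show "a v = 1 \<or> a v = 4 \<or> a v = 7" unfolding a_def using alpha_vals[OF K fD] by blast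
  qed
  have linT: "\<And>t1 t2 u v. t1 \<in> T \<Longrightarrow> t2 \<in> T \<Longrightarrow> u \<in> t1 \<Longrightarrow> v \<in> t1 \<Longrightarrow> u \<in> t2 \<Longrightarrow> v \<in> t2 \<Longrightarrow> u \<noteq> v \<Longrightarrow> t1 = t2"
    using lin[OF K] TD by blast
  have sumA: "(\<Sum>v\<in>V. a v) = 39"
  proof -
    have "(\<Sum>v\<in>V. a v) = (\<Sum>t\<in>T. card (t \<inter> V))" unfolding aT using double_count[OF fT fV] .
    also have "\<dots> = (\<Sum>t\<in>T. 3)" by (rule sum.cong) (use Tsub in \<open>auto simp: Int_absorb2\<close>)
    finally show ?thesis using cT by simp
  qed
  have sum21: "(\<Sum>v\<in>V. a v - 1) = 21"
  proof -
    have "(\<Sum>v\<in>V. a v) = (\<Sum>v\<in>V. (a v - 1) + 1)"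
      by (rule sum.cong) (use vals in fastforce)+
    also have "\<dots> = (\<Sum>v\<in>V. a v - 1) + card V" by (simp only: sum.distrib) simp
    finally show ?thesis using sumA assms(2) by simp
  qed
  have no7: "\<And>x. x \<in> V \<Longrightarrow> a x \<noteq> 7"
  proof
    fix x assume x: "x \<in> V" and ax: "a x = 7"
    define F where "F = {v\<in>V. v \<noteq> x \<and> a v \<noteq> 1}"
    define T' where "T' = {t\<in>T. x \<notin> t}"
    have fF: "finite F" unfolding F_def using fV by simp
    have fT': "finite T'" unfolding T'_def using fT by simp
    have cT': "card T' = 6"
    proof -
      have "T' = T - {t\<in>T. x \<in> t}" unfolding T'_def by blast
      then have "card T' = card T - card {t\<in>T. x \<in> t}"
        using fT by (simp add: card_Diff_subset)
      then show ?thesis using cT ax aT by simp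
    qed
    have sumF: "(\<Sum>v\<in>F. a v - 1) = 15"
    proof -
      have "(\<Sum>v\<in>V. a v - 1) = (\<Sum>v\<in>insert x F. a v - 1)"
      proof (rule sum.mono_neutral_right[OF fV])
        show "insert x F \<subseteq> V" using x unfolding F_def by blast
        show "\<forall>i\<in>V - insert x F. a i - 1 = 0" unfolding F_def by auto
      qed
      also have "\<dots> = (a x - 1) + (\<Sum>v\<in>F. a v - 1)"
        using fF by (simp add: F_def)
      finally show ?thesis using sum21 ax by simp
    qed
    have cF: "card F \<le> 5"
    proof -
      have "card F * 3 \<le> (\<Sum>v\<in>F. a v - 1)"
        using sum_bounded_below[of F 3 "\<lambda>v. a v - 1"] vals unfolding F_def by fastforce
      then show ?thesis using sumF by simp
    qed
    have ge: "\<And>f. f \<in> F \<Longrightarrow> a f - 1 \<le> card {t\<in>T'. f \<in> t}"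
    proof -
      fix f assume f: "f \<in> F"
      have fx: "f \<noteq> x" using f unfolding F_def by blast
      have "{t\<in>T. f \<in> t} \<subseteq> {t\<in>T'. f \<in> t} \<union> {t\<in>T. f \<in> t \<and> x \<in> t}"
        unfolding T'_def by blast
      then have "card {t\<in>T. f \<in> t} \<le> card ({t\<in>T'. f \<in> t} \<union> {t\<in>T. f \<in> t \<and> x \<in> t})"
        by (rule card_mono[rotated]) (use fT fT' in simp)
      also have "\<dots> \<le> card {t\<in>T'. f \<in> t} + card {t\<in>T. f \<in> t \<and> x \<in> t}"
        by (rule card_Un_le)
      also have "card {t\<in>T. f \<in> t \<and> x \<in> t} \<le> Suc 0"
        using card_le_Suc0_iff_eq[of "{t\<in>T. f \<in> t \<and> x \<in> t}"] fT linT fx by auto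
      finally show "a f - 1 \<le> card {t\<in>T'. f \<in> t}" using aT by simp
    qed
    have s15: "15 \<le> (\<Sum>t\<in>T'. card (t \<inter> F))"
    proof -
      have "15 = (\<Sum>v\<in>F. a v - 1)" using sumF by simp
      also have "\<dots> \<le> (\<Sum>v\<in>F. card {t\<in>T'. v \<in> t})" by (rule sum_mono) (rule ge)
      also have "\<dots> = (\<Sum>t\<in>T'. card (t \<inter> F))" using double_count[OF fT' fF] .
      finally show ?thesis .
    qed
    have pc: "(\<Sum>t\<in>T'. card (t \<inter> F) choose 2) \<le> 10"
    proof -
      have "(\<Sum>t\<in>T'. card (t \<inter> F) choose 2) \<le> card F choose 2"
        by (rule pair_count[OF fT' fF]) (use linT in \<open>unfold T'_def, blast\<close>)
      also have "\<dots> \<le> 5 choose 2" using cF by (rule binomial_right_mono)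
      finally show ?thesis by (simp add: numeral_eq_Suc)
    qed
    have ineq: "\<And>t. t \<in> T' \<Longrightarrow> 2 * card (t \<inter> F) \<le> (card (t \<inter> F) choose 2) + 3"
    proof -
      fix t assume t: "t \<in> T'"
      then have ct: "card t = 3" "finite t" using Tsub fV unfolding T'_def by (auto intro: finite_subset)
      have "card (t \<inter> F) \<le> 3" using card_mono[OF ct(2), of "t \<inter> F"] ct(1) by simp
      then have "card (t \<inter> F) \<in> {0,1,2,3}" by auto
      then show "2 * card (t \<inter> F) \<le> (card (t \<inter> F) choose 2) + 3" by (auto simp: numeral_eq_Suc)
    qed
    have "2 * 15 \<le> 2 * (\<Sum>t\<in>T'. card (t \<inter> F))" using s15 by simp
    also have "\<dots> = (\<Sum>t\<in>T'. 2 * card (t \<inter> F))" by (simp add: sum_distrib_left)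
    also have "\<dots> \<le> (\<Sum>t\<in>T'. (card (t \<inter> F) choose 2) + 3)" by (rule sum_mono) (rule ineq)
    also have "\<dots> = (\<Sum>t\<in>T'. card (t \<inter> F) choose 2) + 18" using cT' by (simp add: sum.distrib)
    also have "\<dots> \<le> 28" using pc by simp
    finally show False by simp
  qed
  define W where "W = {v\<in>V. a v = 4}"
  have fW: "finite W" unfolding W_def using fV by simp
  have WV: "W \<subseteq> V" unfolding W_def by blast
  have cW: "card W = 7"
  proof -
    have "(\<Sum>v\<in>V. a v - 1) = (\<Sum>v\<in>W. a v - 1)"
    proof (rule sum.mono_neutral_right[OF fV WV])
      show "\<forall>i\<in>V - W. a i - 1 = 0" unfolding W_def using vals no7 by fastforce
    qed
    also have "\<dots> = (\<Sum>v\<in>W. 3)" by (rule sum.cong) (auto simp: W_def)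
    finally show ?thesis using sum21 by simp
  qed
  have s28: "(\<Sum>t\<in>T. card (t \<inter> W)) = 28"
  proof -
    have "(\<Sum>t\<in>T. card (t \<inter> W)) = (\<Sum>v\<in>W. a v)" unfolding aT using double_count[OF fT fW] by simp
    also have "\<dots> = (\<Sum>v\<in>W. 4)" by (rule sum.cong) (auto simp: W_def)
    finally show ?thesis using cW by simp
  qed
  define U where "U = {t\<in>T. t \<subseteq> W}"
  have cU: "card U \<ge> 2"
  proof (rule ccontr)
    assume "\<not> card U \<ge> 2"
    then have u1: "card U \<le> 1" by simp
    have UT: "U \<subseteq> T" unfolding U_def by blast
    have fU: "finite U" using fT UT finite_subset by blast
    have sp: "(\<Sum>t\<in>T. card (t \<inter> W)) = (\<Sum>t\<in>T - U. card (t \<inter> W)) + (\<Sum>t\<in>U. card (t \<inter> W))"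
      using sum.subset_diff[OF UT fT] .
    have b1: "(\<Sum>t\<in>U. card (t \<inter> W)) \<le> (\<Sum>t\<in>U. 3)"
    proof (rule sum_mono)
      fix t assume "t \<in> U"
      then have "card t = 3" "finite t" using Tsub UT fV by (auto intro: finite_subset)
      then show "card (t \<inter> W) \<le> 3" using card_mono[of t "t \<inter> W"] by simp
    qed
    have b2: "(\<Sum>t\<in>T - U. card (t \<inter> W)) \<le> (\<Sum>t\<in>T - U. 2)"
    proof (rule sum_mono)
      fix t assume t: "t \<in> T - U"
      then have ct: "card t = 3" "finite t" using Tsub fV by (auto intro: finite_subset)
      have "t \<inter> W \<subset> t" using t unfolding U_def by blast
      then have "card (t \<inter> W) < card t" using ct(2) by (rule psubset_card_mono[rotated])
      then show "card (t \<inter> W) \<le> 2" using ct by simp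
    qed
    have c3: "card (T - U) = 13 - card U" using card_Diff_subset[OF fU UT] cT by simp
    have "28 \<le> 2 * (13 - card U) + 3 * card U" using sp b1 b2 c3 s28 by simp
    then show False using u1 by simp
  qed
  show ?thesis
  proof (intro exI conjI)
    show "W \<subseteq> V" by fact
    show "card W = 7" by fact
    show "\<forall>w\<in>W. alpha_at D w = 4" unfolding W_def a_def by blast
    show "card {B \<in> triples D. B \<subseteq> W} \<ge> 2" using cU unfolding U_def T_def .
  qed
qed

end
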